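(* Let $(Q,\cdot)$ be a groupoid of order $n$ with elements ordered as $q_1,\dots,q_n$, which is $k$-translatable with respect to this ordering ($1\le k<n$) and contains a cancellable element. Then $Q$ is a quasigroup if and only if $\gcd(k,n)=1$.
   Context: An element $c$ is cancellable if $cx=cy\Rightarrow x=y$ and $xc=yc\Rightarrow x=y$. A finite groupoid with ordering $q_1,\dots,q_n$ is $k$-translatable with respect to this ordering if $q_i\cdot q_j=q_{i-1}\cdot q_{j-k}$ for all $i\in\{2,\dots,n\}$, $j\in\{1,\dots,n\}$, indices taken modulo $n$ in $\{1,\dots,n\}$. *)

theory Defs
  imports Main
begin

definition modn :: "int \<Rightarrow> nat \<Rightarrow> nat" where
  "modn i n = nat ((i - 1) mod int n) + 1"

definition groupoid :: "'a set \<Rightarrow> ('a \<Rightarrow> 'a \<Rightarrow> 'a) \<Rightarrow> bool" where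
  "groupoid Q f \<longleftrightarrow> (\<forall>x\<in>Q. \<forall>y\<in>Q. f x y \<in> Q)"

definition cancellable :: "'a set \<Rightarrow> ('a \<Rightarrow> 'a \<Rightarrow> 'a) \<Rightarrow> 'a \<Rightarrow> bool" where
  "cancellable Q f c \<longleftrightarrow> c \<in> Q \<and>
     (\<forall>x\<in>Q. \<forall>y\<in>Q. f c x = f c y \<longrightarrow> x = y) \<and>
     (\<forall>x\<in>Q. \<forall>y\<in>Q. f x c = f y c \<longrightarrow> x = y)"

definition quasigroup :: "'a set \<Rightarrow> ('a \<Rightarrow> 'a \<Rightarrow> 'a) \<Rightarrow> bool" where
  "quasigroup Q f \<longleftrightarrow> groupoid Q f \<and>
     (\<forall>a\<in>Q. \<forall>b\<in>Q. (\<exists>!x. x \<in> Q \<and> f a x = b) \<and> (\<exists>!y. y \<in> Q \<and> f y a = b))"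

(* q : {1..n} -> Q is the ordering q_1,...,q_n *)
definition k_translatable ::
  "'a set \<Rightarrow> ('a \<Rightarrow> 'a \<Rightarrow> 'a) \<Rightarrow> nat \<Rightarrow> (nat \<Rightarrow> 'a) \<Rightarrow> nat \<Rightarrow> bool" where
  "k_translatable Q f n q k \<longleftrightarrow>
     (\<forall>i\<in>{2..n}. \<forall>j\<in>{1..n}.
        f (q i) (q j) = f (q (i - 1)) (q (modn (int j - int k) n)))"

end

theory Submission
  imports Defs
begin

lemma modn_cong: "0 < n \<Longrightarrow> modn s n = modn t n \<longleftrightarrow> s mod int n = t mod int n"
  unfolding modn_def
proof -
  assume n: "0 < n"
  have "(nat ((s - 1) mod int n) + 1 = nat ((t - 1) mod int n) + 1) \<longleftrightarrow> (s - 1) mod int n = (t - 1) mod int n"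
    using n by (simp add: eq_nat_nat_iff)
  also have "\<dots> \<longleftrightarrow> s mod int n = t mod int n"
    by (metis add_diff_cancel_right' diff_add_cancel mod_add_cong mod_diff_cong)
  finally show "(nat ((s - 1) mod int n) + 1 = nat ((t - 1) mod int n) + 1) \<longleftrightarrow> s mod int n = t mod int n" .
qed

lemma modn_range: "0 < n \<Longrightarrow> modn s n \<in> {1..n}"
  unfolding modn_def
proof -
  assume n: "0 < n"
  have "(s - 1) mod int n < int n" "0 \<le> (s - 1) mod int n" using n by simp_all
  then have "nat ((s - 1) mod int n) < n" using nat_less_iff by blast
  then show "nat ((s - 1) mod int n) + 1 \<in> {1..n}" by simp
qed

lemma modn_id: "j \<in> {1..n} \<Longrightarrow> modn (int j) n = j"
  unfolding modn_def by (auto simp: of_nat_diff)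

lemma modn_mod: "0 < n \<Longrightarrow> int (modn x n) mod int n = x mod int n"
proof -
  assume n: "0 < n"
  have "int (modn x n) = (x - 1) mod int n + 1" using n unfolding modn_def by simp
  then show ?thesis by (metis diff_add_cancel mod_add_left_eq)
qed

lemma modn_eq_idx: "i \<in> {1..n} \<Longrightarrow> j \<in> {1..n} \<Longrightarrow> int i mod int n = int j mod int n \<Longrightarrow> i = j"
  by (metis modn_id modn_cong atLeastAtMost_iff less_le_trans zero_less_one)

theorem proposition8p8:
  fixes Q :: "'a set" and f :: "'a \<Rightarrow> 'a \<Rightarrow> 'a" and q :: "nat \<Rightarrow> 'a" and n k :: nat
  assumes "groupoid Q f"
    and "bij_betw q {1..n} Q"
    and "1 \<le> k" and "k < n"
    and "k_translatable Q f n q k"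
    and "\<exists>c\<in>Q. cancellable Q f c"
  shows "quasigroup Q f \<longleftrightarrow> gcd k n = 1"
proof -
  have n: "0 < n" using assms by simp
  have qinj: "inj_on q {1..n}" and qim: "q ` {1..n} = Q" using assms(2) by (auto simp: bij_betw_def)
  define R where "R t = f (q 1) (q (modn t n))" for t
  have trans: "f (q (Suc m)) (q j) = R (int j - int m * int k)" if "Suc m \<le> n" "j \<in> {1..n}" for m j
    using that
  proof (induction m arbitrary: j)
    case 0
    then show ?case by (simp add: R_def modn_id)
  next
    case (Suc m)
    have "f (q (Suc (Suc m))) (q j) = f (q (Suc m)) (q (modn (int j - int k) n))"
      using assms(5) Suc.prems unfolding k_translatable_def by auto
    also have "\<dots> = R (int (modn (int j - int k) n) - int m * int k)"
      using Suc.IH Suc.prems modn_range[OF n] by auto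
    also have "\<dots> = R (int j - int (Suc m) * int k)"
    proof -
      have "(int (modn (int j - int k) n) - int m * int k) mod int n = (int j - int k - int m * int k) mod int n"
        using modn_mod[OF n] mod_diff_cong by blast
      have "modn (int (modn (int j - int k) n) - int m * int k) n = modn (int j - int (Suc m) * int k) n"
      proof (rule modn_cong[OF n, THEN iffD2])
        have eq: "int j - int k - int m * int k = int j - int (Suc m) * int k" by (simp add: algebra_simps)
        show "(int (modn (int j - int k) n) - int m * int k) mod int n = (int j - int (Suc m) * int k) mod int n"
          using \<open>(int (modn (int j - int k) n) - int m * int k) mod int n = (int j - int k - int m * int k) mod int n\<close> unfolding eq .
      qed
      then show ?thesis unfolding R_def by simp
    qed
    finally show ?case .
  qed
  have trans': "f (q i) (q j) = R (int j - (int i - 1) * int k)" if "i \<in> {1..n}" "j \<in> {1..n}" for i j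
    using trans[of "i - 1" j] that by (simp add: of_nat_diff)
  obtain c where c: "c \<in> Q" "cancellable Q f c" using assms(6) by blast
  obtain a where a: "a \<in> {1..n}" "c = q a" using c qim by auto
  have Rinj: "s mod int n = t mod int n" if "R s = R t" for s t
  proof -
    define j1 where "j1 = modn (s + (int a - 1) * int k) n"
    define j2 where "j2 = modn (t + (int a - 1) * int k) n"
    have j: "j1 \<in> {1..n}" "j2 \<in> {1..n}" using modn_range[OF n] j1_def j2_def by auto
    have e1: "f (q a) (q j1) = R s"
    proof -
      have "(int j1 - (int a - 1) * int k) mod int n = s mod int n"
      proof -
        have "(int j1 - (int a - 1) * int k) mod int n = (s + (int a - 1) * int k - (int a - 1) * int k) mod int n"
          unfolding j1_def by (rule mod_diff_cong[OF modn_mod[OF n]]) simp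
        then show ?thesis by simp
      qed
      then have "modn (int j1 - (int a - 1) * int k) n = modn s n" using modn_cong[OF n] by blast
      then show ?thesis using trans'[OF a(1) j(1)] unfolding R_def by simp
    qed
    have e2: "f (q a) (q j2) = R t"
    proof -
      have "(int j2 - (int a - 1) * int k) mod int n = t mod int n"
      proof -
        have "(int j2 - (int a - 1) * int k) mod int n = (t + (int a - 1) * int k - (int a - 1) * int k) mod int n"
          unfolding j2_def by (rule mod_diff_cong[OF modn_mod[OF n]]) simp
        then show ?thesis by simp
      qed
      then have "modn (int j2 - (int a - 1) * int k) n = modn t n" using modn_cong[OF n] by blast
      then show ?thesis using trans'[OF a(1) j(2)] unfolding R_def by simp
    qed
    have lc: "\<forall>x\<in>Q. \<forall>y\<in>Q. f c x = f c y \<longrightarrow> x = y" using c(2) unfolding cancellable_def by blast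
    have "q j1 \<in> Q" "q j2 \<in> Q" using j qim by auto
    moreover have "f c (q j1) = f c (q j2)" using a(2) e1 e2 that by simp
    ultimately have "q j1 = q j2" using lc by blast
    then have "j1 = j2" using qinj j by (meson inj_onD)
    then have "(s + (int a - 1) * int k) mod int n = (t + (int a - 1) * int k) mod int n"
      using modn_cong[OF n] j1_def j2_def by simp
    then have "(s + (int a - 1) * int k - (int a - 1) * int k) mod int n = (t + (int a - 1) * int k - (int a - 1) * int k) mod int n"
      by (rule mod_diff_cong) (rule refl)
    then show ?thesis by simp
  qed
  have G: "gcd k n = 1"
  proof (rule ccontr)
    assume "gcd k n \<noteq> 1"
    define d where "d = gcd k n"
    have dpos: "d > 0" using n by (simp add: d_def)
    have d2: "d \<ge> 2" using dpos \<open>gcd k n \<noteq> 1\<close> d_def by linarith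
    have ddvd: "d dvd n" "d dvd k" unfolding d_def by auto
    have dle: "d \<le> n" using ddvd(1) n by (rule dvd_imp_le)
    define i2 where "i2 = 1 + n div d"
    have ndd: "n div d \<ge> 1" using dle dpos by (simp add: div_greater_zero_iff Suc_le_eq)
    have "n div d < n" using n d2 by simp
    then have i2r: "i2 \<in> {1..n}" unfolding i2_def by auto
    obtain k' where k': "k = d * k'" using ddvd(2) by (rule dvdE)
    have "(n div d) * k = n * k'" using ddvd(1) k' by (simp add: mult.assoc[symmetric])
    then have "int (n div d) * int k = int n * int k'" by (metis of_nat_mult)
    then have z: "(int (n div d) * int k) mod int n = 0" by simp
    have "f (q i2) (q a) = f (q 1) (q a)"
    proof -
      have "f (q i2) (q a) = R (int a - int (n div d) * int k)" using trans'[OF i2r a(1)] i2_def by simp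
      also have "\<dots> = R (int a)"
      proof -
        have "(int a - int (n div d) * int k) mod int n = int a mod int n"
          using mod_diff_right_eq[of "int a" "int (n div d) * int k" "int n", symmetric] z by simp
        then have "modn (int a - int (n div d) * int k) n = modn (int a) n" using modn_cong[OF n] by blast
        then show ?thesis unfolding R_def by simp
      qed
      also have "\<dots> = f (q 1) (q a)" using trans'[of 1 a] a n by simp
      finally show ?thesis .
    qed
    moreover have rc: "\<forall>x\<in>Q. \<forall>y\<in>Q. f x c = f y c \<longrightarrow> x = y" using c(2) unfolding cancellable_def by blast
    moreover have "q i2 \<in> Q" "q 1 \<in> Q" using i2r n qim by auto
    ultimately have "q i2 = q 1" using a(2) by blast
    then have "i2 = 1" using qinj i2r n by (auto dest: inj_onD)
    then show False using ndd i2_def by simp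
  qed
  have cop: "coprime (int k) (int n)" using G by (simp add: coprime_iff_gcd_eq_1)
  have finQ: "finite Q" using qim by auto
  have QG: "quasigroup Q f"
    unfolding quasigroup_def
  proof (intro conjI ballI)
    show "groupoid Q f" by (rule assms(1))
    fix x b assume x: "x \<in> Q" and b: "b \<in> Q"
    obtain i where i: "i \<in> {1..n}" "x = q i" using x qim by auto
    have inj1: "inj_on (f x) Q"
    proof (rule inj_onI)
      fix y z assume y: "y \<in> Q" and z: "z \<in> Q" and e: "f x y = f x z"
      obtain j where j: "j \<in> {1..n}" "y = q j" using y qim by auto
      obtain j' where j': "j' \<in> {1..n}" "z = q j'" using z qim by auto
      have "f (q i) (q j) = f (q i) (q j')" using e i j j' by simp
      then have "R (int j - (int i - 1) * int k) = R (int j' - (int i - 1) * int k)"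
        using trans'[OF i(1) j(1)] trans'[OF i(1) j'(1)] by simp
      then have "(int j - (int i - 1) * int k) mod int n = (int j' - (int i - 1) * int k) mod int n"
        by (rule Rinj)
      then have "(int j - (int i - 1) * int k + (int i - 1) * int k) mod int n = (int j' - (int i - 1) * int k + (int i - 1) * int k) mod int n"
        by (rule mod_add_cong) (rule refl)
      then have "int j mod int n = int j' mod int n" by simp
      then have "j = j'" by (rule modn_eq_idx[OF j(1) j'(1)])
      then show "y = z" using j(2) j'(2) by simp
    qed
    have inj2: "inj_on (\<lambda>y. f y x) Q"
    proof (rule inj_onI)
      fix y z assume y: "y \<in> Q" and z: "z \<in> Q" and e: "f y x = f z x"
      obtain j where j: "j \<in> {1..n}" "y = q j" using y qim by auto
      obtain j' where j': "j' \<in> {1..n}" "z = q j'" using z qim by auto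
      have "f (q j) (q i) = f (q j') (q i)" using e i j j' by simp
      then have "R (int i - (int j - 1) * int k) = R (int i - (int j' - 1) * int k)"
        using trans'[OF j(1) i(1)] trans'[OF j'(1) i(1)] by simp
      then have "(int i - (int j - 1) * int k) mod int n = (int i - (int j' - 1) * int k) mod int n"
        by (rule Rinj)
      then have "int n dvd (int i - (int j - 1) * int k) - (int i - (int j' - 1) * int k)"
        by (simp only: mod_eq_dvd_iff)
      moreover have "(int i - (int j - 1) * int k) - (int i - (int j' - 1) * int k) = (int j' - int j) * int k"
        by (simp add: algebra_simps)
      ultimately have "int n dvd (int j' - int j) * int k" by simp
      then have "int n dvd (int j' - int j)"
        using coprime_dvd_mult_left_iff[of "int n" "int k" "int j' - int j"] cop by (simp add: coprime_commute)
      then have "int j' mod int n = int j mod int n" by (simp only: mod_eq_dvd_iff)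
      then have "j' = j" by (rule modn_eq_idx[OF j'(1) j(1)])
      then show "y = z" using j(2) j'(2) by simp
    qed
    have sub1: "f x ` Q \<subseteq> Q" and sub2: "(\<lambda>y. f y x) ` Q \<subseteq> Q"
      using assms(1) x unfolding groupoid_def by auto
    have "f x ` Q = Q" using inj1 sub1 finQ by (simp add: endo_inj_surj)
    then have "b \<in> f x ` Q" using b by simp
    then obtain y where y1: "y \<in> Q" "f x y = b" by (rule imageE) simp
    show "\<exists>!y. y \<in> Q \<and> f x y = b"
    proof (rule ex1I[where a=y])
      show "y \<in> Q \<and> f x y = b" using y1 by simp
      fix z assume "z \<in> Q \<and> f x z = b"
      then show "z = y" using y1 inj_onD[OF inj1, of z y] by simp
    qed
    have "(\<lambda>y. f y x) ` Q = Q" using inj2 sub2 finQ by (simp add: endo_inj_surj)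
    then have "b \<in> (\<lambda>y. f y x) ` Q" using b by simp
    then obtain y where y2: "y \<in> Q" "f y x = b" by (rule imageE) simp
    show "\<exists>!y. y \<in> Q \<and> f y x = b"
    proof (rule ex1I[where a=y])
      show "y \<in> Q \<and> f y x = b" using y2 by simp
      fix z assume "z \<in> Q \<and> f z x = b"
      then show "z = y" using y2 inj_onD[OF inj2, of z y] by simp
    qed
  qed
  show ?thesis using G QG by simp
qed

end
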